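(* For every $Q \in \mathrm{O}(n)$, \[ \lim_{\varepsilon\to0}\|f^{Qe_n}_\varepsilon\|_{L^1(\mathbb{S}^{n-1})} = \int_{\mathbb{R}^{n-1}}\chi(\eta, -|\eta|^2/2)\,d\eta. \] Furthermore, there exists a constant $C>0$, depending only on $n$ (and the fixed function $\chi$), such that $\|f^{Qe_n}_\varepsilon\|_{L^2(\mathbb{S}^{n-1})} \leq C\varepsilon^{-(n-1)/2}$ for all $\varepsilon\in(0,1]$ and all $Q\in\mathrm{O}(n)$.
   Context: Fix $\chi \in C_c^\infty(\mathbb{R}^n)$ with $0\le\chi\le1$ and $\operatorname{supp}\chi \subset \{\xi\in\mathbb{R}^n : |\xi|<1/2\}$. Write $\xi = (\xi', \xi_n)$ with $\xi'\in\mathbb{R}^{n-1}$, $\xi_n = \xi\cdot e_n$, where $e_1,\dots,e_n$ is the standard basis. For $\varepsilon>0$ define $\chi_\varepsilon(\xi) = \varepsilon^{-(n-1)}\chi(\xi'/\varepsilon, (\xi_n-1)/\varepsilon^2)$ and $f^{e_n}_\varepsilon = \chi_\varepsilon|_{\mathbb{S}^{n-1}}$; for $Q\in\mathrm{O}(n)$ define $f^{Qe_n}_\varepsilon(\theta) = f^{e_n}_\varepsilon(Q^{\mathsf T}\theta)$, $\theta\in\mathbb{S}^{n-1}$. Norms on $\mathbb{S}^{n-1}$ are with respect to surface measure. *)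

theory Defs
  imports "HOL-Analysis.Analysis"
begin

fun Ck :: "nat \<Rightarrow> ('a::euclidean_space \<Rightarrow> real) \<Rightarrow> bool" where
  "Ck 0 f = continuous_on UNIV f"
| "Ck (Suc k) f = ((\<forall>x. f differentiable (at x)) \<and>
      (\<forall>v. Ck k (\<lambda>x. frechet_derivative f (at x) v)))"

definition smooth_fun :: "('a::euclidean_space \<Rightarrow> real) \<Rightarrow> bool" where
  "smooth_fun f \<longleftrightarrow> (\<forall>k. Ck k f)"

text \<open>Surface measure on the unit sphere of a Euclidean space of dimension d,
defined by polar coordinates (cone measure):
sigma(A) = d * lebesgue-measure of the cone {r x | 0 < r <= 1, x in A}, realised
as d times the push-forward of Lebesgue measure on the unit ball under x / |x|.
(The single point 0 is a null set.)\<close>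
definition sphere_measure :: "('a::euclidean_space) measure" where
  "sphere_measure = distr (density lborel (\<lambda>x. ennreal (real DIM('a)) * indicator (ball 0 1) x))
      borel (\<lambda>x. x /\<^sub>R norm x)"

text \<open>R^n is modelled as 'a \<times> real with 'a = R^(n-1); e_n = (0,1).
chi_eps(xi) = eps^-(n-1) chi(xi'/eps, (xi_n - 1)/eps^2).\<close>
definition chi_eps :: "('a::euclidean_space \<times> real \<Rightarrow> real) \<Rightarrow> real \<Rightarrow> 'a \<times> real \<Rightarrow> real" where
  "chi_eps chi eps xi = eps powr (- real DIM('a)) *
      chi (fst xi /\<^sub>R eps, (snd xi - 1) / eps^2)"

definition f_eps :: "('a::euclidean_space \<times> real \<Rightarrow> real) \<Rightarrow> real \<Rightarrow>
    ('a \<times> real \<Rightarrow> 'a \<times> real) \<Rightarrow> 'a \<times> real \<Rightarrow> real" where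
  "f_eps chi eps Q th = chi_eps chi eps (adjoint Q th)"

end

theory Submission
  imports Defs
begin


typedef (overloaded) ('a::euclidean_space) bidx = "Basis :: 'a set" morphisms rep_b abs_b
  using nonempty_Basis by blast

lemma finite_bidx: "finite (UNIV :: ('a::euclidean_space) bidx set)"
  by (metis type_definition.Abs_image[OF type_definition_bidx] finite_Basis finite_imageI)

definition ord_b :: "('a::euclidean_space) bidx \<Rightarrow> nat" where
  "ord_b = (SOME f. inj f)"

lemma inj_ord_b: "inj ord_b"
proof -
  have "\<exists>f :: 'a bidx \<Rightarrow> nat. inj f"
    using finite_bidx countable_finite countableE by (metis inj_on_def)
  then show ?thesis unfolding ord_b_def by (rule someI_ex)
qed

instantiation bidx :: (euclidean_space) linorder
begin
definition less_eq_bidx :: "'a bidx \<Rightarrow> 'a bidx \<Rightarrow> bool" where "less_eq_bidx x y \<longleftrightarrow> ord_b x \<le> ord_b y"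
definition less_bidx :: "'a bidx \<Rightarrow> 'a bidx \<Rightarrow> bool" where "less_bidx x y \<longleftrightarrow> ord_b x < ord_b y"
instance
  using inj_ord_b by intro_classes (auto simp: less_eq_bidx_def less_bidx_def inj_eq dest: injD)
end

instance bidx :: (euclidean_space) wellorder
proof
  fix P :: "'a bidx \<Rightarrow> bool" and a :: "'a bidx"
  assume H: "\<And>x. (\<And>y. y < x \<Longrightarrow> P y) \<Longrightarrow> P x"
  show "P a"
    by (induct a rule: measure_induct_rule[where f=ord_b]) (rule H, auto simp: less_bidx_def)
qed

instance bidx :: (euclidean_space) finite
  by intro_classes (rule finite_bidx)

lemma prod_Basis_cart: "(\<Prod>b\<in>(Basis::(real^'n) set). x \<bullet> b) = (\<Prod>i\<in>UNIV. x$i)"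
  by (simp add: Basis_vec_def cart_eq_inner_axis axis_eq_axis prod.UNION_disjoint)

definition Tb :: "'e::euclidean_space \<Rightarrow> real^('e bidx)" where
  "Tb x = (\<chi> i. x \<bullet> rep_b i)"

definition Ti :: "real^('e::euclidean_space bidx) \<Rightarrow> 'e" where
  "Ti y = (\<Sum>i\<in>UNIV. (y$i) *\<^sub>R rep_b i)"

lemma rep_b_bij: "bij_betw rep_b UNIV (Basis :: 'e::euclidean_space set)"
  by (metis bij_betw_def inj_on_def rep_b_inject type_definition.Rep_range type_definition_bidx)

lemma rep_b_range: "range rep_b = (Basis :: 'e::euclidean_space set)"
  by (rule type_definition.Rep_range[OF type_definition_bidx])

lemma sum_rep_b: "(\<Sum>i\<in>UNIV. f (rep_b i)) = (\<Sum>b\<in>(Basis::'e::euclidean_space set). f b)"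
  using sum.reindex_bij_betw[OF rep_b_bij, of f] by simp

lemma prod_rep_b: "(\<Prod>i\<in>UNIV. f (rep_b i)) = (\<Prod>b\<in>(Basis::'e::euclidean_space set). f b)"
  using prod.reindex_bij_betw[OF rep_b_bij, of f] by simp

lemma Ti_Tb: "Ti (Tb x) = x"
proof -
  have "Ti (Tb x) = (\<Sum>i\<in>UNIV. (x \<bullet> rep_b i) *\<^sub>R rep_b i)"
    unfolding Ti_def Tb_def by simp
  also have "\<dots> = (\<Sum>b\<in>Basis. (x \<bullet> b) *\<^sub>R b)"
    by (rule sum_rep_b)
  also have "\<dots> = x" by (rule euclidean_representation)
  finally show ?thesis .
qed

lemma Ti_inner: "Ti y \<bullet> rep_b j = y $ j"
proof -
  have "Ti y \<bullet> rep_b j = (\<Sum>i\<in>UNIV. y$i * (rep_b i \<bullet> rep_b j))"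
    unfolding Ti_def by (simp add: inner_sum_left)
  also have "\<dots> = (\<Sum>i\<in>UNIV. if i = j then y$i else 0)"
    by (intro sum.cong refl) (simp add: inner_Basis rep_b rep_b_inject)
  finally show ?thesis by simp
qed

lemma Tb_Ti: "Tb (Ti y) = y"
  unfolding Tb_def by (simp add: Ti_inner vec_eq_iff)

lemma linear_Tb: "linear Tb"
  by (rule linearI) (simp_all add: Tb_def vec_eq_iff inner_add_left)

lemma linear_Ti: "linear Ti"
proof (rule linearI)
  show "Ti (x + y) = Ti x + Ti y" for x y
    unfolding Ti_def by (simp add: scaleR_add_left sum.distrib)
  show "Ti (c *\<^sub>R x) = c *\<^sub>R Ti x" for c x
    unfolding Ti_def by (simp add: scaleR_sum_right)
qed

lemma Tb_inner: "Tb x \<bullet> Tb y = x \<bullet> y"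
proof -
  have "Tb x \<bullet> Tb y = (\<Sum>i\<in>UNIV. (x \<bullet> rep_b i) * (y \<bullet> rep_b i))"
    by (simp add: Tb_def inner_vec_def)
  also have "\<dots> = (\<Sum>b\<in>Basis. (x \<bullet> b) * (y \<bullet> b))"
    by (rule sum_rep_b)
  also have "\<dots> = x \<bullet> y"
    by (rule euclidean_inner[symmetric])
  finally show ?thesis .
qed

lemma Ti_inner2: "Ti x \<bullet> Ti y = x \<bullet> y"
  by (metis Tb_Ti Tb_inner)

lemma Tb_measurable[measurable]: "Tb \<in> borel_measurable borel"
  using linear_Tb by (intro borel_measurable_continuous_onI linear_continuous_on) (simp add: linear_conv_bounded_linear[symmetric])

lemma Ti_measurable[measurable]: "Ti \<in> borel_measurable borel"
  using linear_Ti by (intro borel_measurable_continuous_onI linear_continuous_on) (simp add: linear_conv_bounded_linear[symmetric])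

lemma distr_Tb: "distr lborel borel (Tb :: 'e::euclidean_space \<Rightarrow> _) = lborel"
proof (rule lborel_eqI[symmetric])
  fix l u :: "real^('e bidx)"
  assume le: "\<And>b. b \<in> Basis \<Longrightarrow> l \<bullet> b \<le> u \<bullet> b"
  have le': "l$i \<le> u$i" for i
    using le[of "axis i 1"] by (auto simp: cart_eq_inner_axis Basis_vec_def)
  have pre: "Tb -` box l u = box (Ti l) (Ti u)"
  proof -
    have "x \<in> box (Ti l) (Ti u) \<longleftrightarrow> (\<forall>i. l$i < x \<bullet> rep_b i \<and> x \<bullet> rep_b i < u$i)" for x
      unfolding mem_box rep_b_range[symmetric] by (simp add: Ti_inner)
    then show ?thesis by (auto simp: mem_box_cart Tb_def)
  qed
  have "emeasure (distr lborel borel Tb) (box l u) = emeasure lborel (box (Ti l) (Ti u) :: 'e set)"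
    by (simp add: emeasure_distr pre)
  also have "\<dots> = (\<Prod>b\<in>Basis. (Ti u - Ti l) \<bullet> b)"
    using le' by (subst emeasure_lborel_box_eq) (auto simp: Ti_inner rep_b_range[symmetric] inner_diff_left)
  also have "\<dots> = (\<Prod>i\<in>UNIV. (u - l) $ i)"
    using prod_rep_b[of "\<lambda>b. (Ti u - Ti l) \<bullet> b"] by (simp add: inner_diff_left Ti_inner)
  also have "\<dots> = (\<Prod>b\<in>Basis. (u - l) \<bullet> b)"
    by (simp add: prod_Basis_cart)
  finally show "emeasure (distr lborel borel Tb) (box l u) = (\<Prod>b\<in>Basis. (u - l) \<bullet> b)" .
qed simp


lemma orth_measurable:
  fixes L :: "'e::euclidean_space \<Rightarrow> 'e"
  assumes "orthogonal_transformation L"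
  shows "L \<in> borel_measurable borel"
  using assms by (intro borel_measurable_continuous_onI linear_continuous_on)
    (simp add: linear_conv_bounded_linear[symmetric] orthogonal_transformation_linear)

lemma distr_orth_cart:
  fixes L :: "real^'n::{finite,wellorder} \<Rightarrow> real^'n::_"
  assumes L: "orthogonal_transformation L"
  shows "distr lborel borel L = lborel"
proof (rule lborel_eqI[symmetric])
  fix l u :: "(real, 'n) vec"
  assume le: "\<And>b. b \<in> Basis \<Longrightarrow> l \<bullet> b \<le> u \<bullet> b"
  have Lm: "L \<in> borel_measurable borel" using L by (rule orth_measurable)
  have Li: "orthogonal_transformation (inv L)" by (rule orthogonal_transformation_inv[OF L])
  have Lib: "bounded_linear (inv L)"
    using orthogonal_transformation_linear[OF Li] linear_conv_bounded_linear by blast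
  define S where "S = L -` box l u"
  have S_img: "S = inv L ` box l u"
    unfolding S_def by (rule bij_vimage_eq_inv_image[OF orthogonal_transformation_bij[OF L]])
  have S_sets: "S \<in> sets lborel"
    using measurable_sets[OF Lm, of "box l u"] unfolding S_def by simp
  have "bounded S"
    unfolding S_img by (rule bounded_linear_image[OF bounded_box Lib])
  then have fin: "emeasure lborel S < \<infinity>" by (rule emeasure_bounded_finite)
  have "measure lborel S = measure lebesgue S"
    using S_sets by (simp only: measure_completion)
  also have "\<dots> = measure lebesgue (box l u)"
    unfolding S_img by (rule measure_orthogonal_image[OF Li lmeasurable_box])
  also have "\<dots> = measure lborel (box l u)" by (rule measure_completion) simp
  also have "\<dots> = (\<Prod>b\<in>Basis. (u - l) \<bullet> b)"
    using le by (simp add: measure_lborel_box_eq)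
  finally have m: "measure lborel S = (\<Prod>b\<in>Basis. (u - l) \<bullet> b)" .
  have "emeasure (distr lborel borel L) (box l u) = emeasure lborel S"
    unfolding S_def using Lm by (simp add: emeasure_distr)
  also have "\<dots> = ennreal (measure lborel S)"
    using fin by (simp add: emeasure_eq_ennreal_measure)
  finally show "emeasure (distr lborel borel L) (box l u) = (\<Prod>b\<in>Basis. (u - l) \<bullet> b)"
    using m by simp
qed simp

lemma distr_Ti: "distr lborel borel (Ti :: real^('e::euclidean_space bidx) \<Rightarrow> 'e) = lborel"
proof -
  have "distr lborel borel (Ti :: real^('e bidx) \<Rightarrow> 'e) = distr (distr lborel borel Tb) borel Ti"
    by (simp add: distr_Tb)
  also have "\<dots> = distr lborel borel (Ti \<circ> Tb)"
    by (simp add: distr_distr)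
  also have "\<dots> = distr lborel borel (\<lambda>x::'e. x)"
    by (simp add: comp_def Ti_Tb)
  also have "\<dots> = lborel" by (simp add: distr_id2)
  finally show ?thesis .
qed

lemma distr_orth:
  fixes L :: "'e::euclidean_space \<Rightarrow> 'e"
  assumes L: "orthogonal_transformation L"
  shows "distr lborel borel L = lborel"
proof -
  define L' where "L' = Tb \<circ> L \<circ> (Ti :: real^('e bidx) \<Rightarrow> 'e)"
  have "orthogonal_transformation L'"
    unfolding orthogonal_transformation_def L'_def
    using L linear_Tb linear_Ti
    by (auto simp: Tb_inner Ti_inner2 orthogonal_transformation_def intro: linear_compose)
  then have L'm: "L' \<in> borel_measurable borel" by (rule orth_measurable)
  have Lm: "L \<in> borel_measurable borel" using L by (rule orth_measurable)
  have eq: "L \<circ> Ti = Ti \<circ> L'"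
    by (auto simp: L'_def Ti_Tb)
  have "distr lborel borel L = distr (distr lborel borel (Ti :: real^('e bidx) \<Rightarrow> 'e)) borel L"
    by (simp add: distr_Ti)
  also have "\<dots> = distr lborel borel (L \<circ> Ti)"
    using Lm by (simp add: distr_distr)
  also have "\<dots> = distr lborel borel (Ti \<circ> L')"
    by (simp add: eq)
  also have "\<dots> = distr (distr lborel borel L') borel Ti"
    using L'm by (simp add: distr_distr)
  also have "\<dots> = lborel"
    by (simp add: distr_orth_cart[OF \<open>orthogonal_transformation L'\<close>] distr_Ti)
  finally show ?thesis .
qed



lemma nn_integral_scale:
  fixes f :: "'a::euclidean_space \<Rightarrow> ennreal"
  assumes [measurable]: "f \<in> borel_measurable borel" and c: "c > 0"
  shows "(\<integral>\<^sup>+x. f x \<partial>lborel) = ennreal (c ^ DIM('a)) * (\<integral>\<^sup>+x. f (c *\<^sub>R x) \<partial>lborel)"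
  using c
  by (subst lborel_affine[of c 0]) (simp_all add: nn_integral_density nn_integral_distr nn_integral_cmult)

lemma t_integral:
  fixes a :: real
  assumes a: "a > 0"
  shows "(\<integral>\<^sup>+t. ennreal (of_bool (0 < t \<and> t < a) * (real (Suc k) * t ^ k)) \<partial>lborel) = ennreal (a ^ Suc k)"
proof -
  have "(\<integral>\<^sup>+t. ennreal (of_bool (0 < t \<and> t < a) * (real (Suc k) * t ^ k)) \<partial>lborel)
      = (\<integral>\<^sup>+t. ennreal (real (Suc k) * t ^ k) * indicator {0..a} t \<partial>lborel)"
  proof (rule nn_integral_cong_AE)
    show "AE t in lborel. ennreal (of_bool (0 < t \<and> t < a) * (real (Suc k) * t ^ k)) =
        ennreal (real (Suc k) * t ^ k) * indicator {0..a} t"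
      using AE_lborel_singleton[of 0] AE_lborel_singleton[of a]
      by eventually_elim (auto simp: indicator_def)
  qed
  also have "\<dots> = ennreal (a ^ Suc k - 0 ^ Suc k)"
    using a
    using DERIV_pow[of "Suc k"]
    by (intro nn_integral_FTC_Icc[where F="\<lambda>t. t ^ Suc k"]) auto
  finally show ?thesis by simp
qed


lemma norm_u1_ge: "norm (u, 1::real) \<ge> 1"
  by (simp add: norm_Pair)

lemma sphere_nn:
  fixes h :: "'a::euclidean_space \<times> real \<Rightarrow> real"
  assumes hm[measurable]: "h \<in> borel_measurable borel"
    and h0: "\<And>x. 0 \<le> h x"
    and hneg: "\<And>x. snd x \<le> 0 \<Longrightarrow> h x = 0"
  shows "(\<integral>\<^sup>+th. ennreal (h th) \<partial>sphere_measure)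
       = (\<integral>\<^sup>+u. ennreal (h ((u, 1) /\<^sub>R norm (u, 1::real)) * (1 / norm (u, 1::real)) ^ DIM('a \<times> real)) \<partial>lborel)"
proof -
  define n where "n = DIM('a \<times> real)"
  have n: "n = Suc DIM('a)" unfolding n_def by simp
  define N where "N u = norm (u, 1::real)" for u :: 'a
  have N1: "N u \<ge> 1" for u unfolding N_def by (rule norm_u1_ge)
  define g where "g x = ennreal (real n) * indicator (ball 0 1) x" for x :: "'a \<times> real"
  define G where "G t u = ennreal (of_bool (0 < t \<and> t * N u < 1) * (real n * t ^ DIM('a)) * h ((u, 1) /\<^sub>R N u))" for t u
  have [measurable]: "N \<in> borel_measurable borel" unfolding N_def[abs_def] by measurable
  have [measurable]: "ball (0::'a \<times> real) 1 \<in> sets borel" by simp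
  have gm[measurable]: "g \<in> borel_measurable borel" unfolding g_def[abs_def] by measurable
  have sph: "sphere_measure = distr (density lborel g) borel (\<lambda>x. x /\<^sub>R norm x)"
    unfolding sphere_measure_def g_def[abs_def] n_def ..
  have "(\<integral>\<^sup>+th. ennreal (h th) \<partial>sphere_measure) = (\<integral>\<^sup>+x. ennreal (h (x /\<^sub>R norm x)) \<partial>density lborel g)"
    unfolding sph by (rule nn_integral_distr) measurable
  also have "\<dots> = (\<integral>\<^sup>+x. g x * ennreal (h (x /\<^sub>R norm x)) \<partial>lborel)"
    by (rule nn_integral_density) measurable
  also have "\<dots> = (\<integral>\<^sup>+x. g x * ennreal (h (x /\<^sub>R norm x)) \<partial>(lborel \<Otimes>\<^sub>M lborel))"
    by (simp add: lborel_prod)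
  also have "\<dots> = (\<integral>\<^sup>+t. (\<integral>\<^sup>+x. g (x, t) * ennreal (h ((x, t) /\<^sub>R norm (x, t))) \<partial>lborel) \<partial>lborel)"
    by (rule lborel_pair.nn_integral_snd[symmetric]) (simp only: lborel_prod, measurable)
  also have "\<dots> = (\<integral>\<^sup>+t. (\<integral>\<^sup>+u. G t u \<partial>lborel) \<partial>lborel)"
  proof (rule nn_integral_cong)
    fix t :: real
    show "(\<integral>\<^sup>+x. g (x, t) * ennreal (h ((x, t) /\<^sub>R norm (x, t))) \<partial>lborel) = (\<integral>\<^sup>+u. G t u \<partial>lborel)"
    proof (cases "t > 0")
      case False
      have "h ((x, t) /\<^sub>R norm (x, t)) = 0" for x
        using False by (intro hneg) (simp add: mult_nonneg_nonpos)
      moreover have "G t u = 0" for u using False by (simp add: G_def)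
      ultimately show ?thesis by simp
    next
      case True
      have "(\<integral>\<^sup>+x. g (x, t) * ennreal (h ((x, t) /\<^sub>R norm (x, t))) \<partial>lborel)
          = ennreal (t ^ DIM('a)) * (\<integral>\<^sup>+u. g (t *\<^sub>R u, t) * ennreal (h ((t *\<^sub>R u, t) /\<^sub>R norm (t *\<^sub>R u, t))) \<partial>lborel)"
        using True by (intro nn_integral_scale) (simp_all add: g_def)
      also have "\<dots> = (\<integral>\<^sup>+u. ennreal (t ^ DIM('a)) * (g (t *\<^sub>R u, t) * ennreal (h ((t *\<^sub>R u, t) /\<^sub>R norm (t *\<^sub>R u, t)))) \<partial>lborel)"
        by (rule nn_integral_cmult[symmetric]) measurable
      also have "\<dots> = (\<integral>\<^sup>+u. G t u \<partial>lborel)"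
      proof (rule nn_integral_cong)
        fix u :: 'a
        have e1: "(t *\<^sub>R u, t) = t *\<^sub>R (u, 1)" by simp
        have e2: "norm (t *\<^sub>R u, t) = t * N u"
          using True by (subst e1, subst norm_scaleR) (simp add: N_def)
        have e3: "(t *\<^sub>R u, t) /\<^sub>R norm (t *\<^sub>R u, t) = (u, 1) /\<^sub>R N u"
          unfolding e2 using True N1[of u] by simp
        have e4: "(t *\<^sub>R u, t) \<in> ball 0 1 \<longleftrightarrow> t * N u < 1"
          using e2 by simp
        show "ennreal (t ^ DIM('a)) * (g (t *\<^sub>R u, t) * ennreal (h ((t *\<^sub>R u, t) /\<^sub>R norm (t *\<^sub>R u, t)))) = G t u"
        proof (cases "t * N u < 1")
          case True2: True
          have "g (t *\<^sub>R u, t) = ennreal (real n)" unfolding g_def using e4 True2 by simp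
          then show ?thesis unfolding e3 G_def using True True2 h0 N1[of u]
            by (simp add: ennreal_mult mult_ac)
        next
          case False2: False
          have "g (t *\<^sub>R u, t) = 0" unfolding g_def using e4 False2 by simp
          then show ?thesis unfolding e3 G_def using False2 by simp
        qed
      qed
      finally show ?thesis .
    qed
  qed
  also have "\<dots> = (\<integral>\<^sup>+u. (\<integral>\<^sup>+t. G t u \<partial>lborel) \<partial>lborel)"
    by (rule lborel_pair.Fubini') (unfold G_def, measurable)
  also have "\<dots> = (\<integral>\<^sup>+u. ennreal (h ((u, 1) /\<^sub>R N u) * (1 / N u) ^ n) \<partial>lborel)"
  proof (rule nn_integral_cong)
    fix u :: 'a
    have pos: "1 / N u > 0" using N1[of u] by simp
    have "(\<integral>\<^sup>+t. G t u \<partial>lborel)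
        = (\<integral>\<^sup>+t. ennreal (h ((u, 1) /\<^sub>R N u)) * ennreal (of_bool (0 < t \<and> t < 1 / N u) * (real (Suc DIM('a)) * t ^ DIM('a))) \<partial>lborel)"
    proof (rule nn_integral_cong)
      fix t :: real
      have "t * N u < 1 \<longleftrightarrow> t < 1 / N u" using N1[of u] by (simp add: field_simps)
      then show "G t u = ennreal (h ((u, 1) /\<^sub>R N u)) * ennreal (of_bool (0 < t \<and> t < 1 / N u) * (real (Suc DIM('a)) * t ^ DIM('a)))"
        unfolding G_def n using h0 by (auto simp: ennreal_mult[symmetric] mult_ac)
    qed
    also have "\<dots> = ennreal (h ((u, 1) /\<^sub>R N u)) * (\<integral>\<^sup>+t. ennreal (of_bool (0 < t \<and> t < 1 / N u) * (real (Suc DIM('a)) * t ^ DIM('a))) \<partial>lborel)"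
      by (rule nn_integral_cmult) measurable
    also have "\<dots> = ennreal (h ((u, 1) /\<^sub>R N u)) * ennreal ((1 / N u) ^ Suc DIM('a))"
      by (simp only: t_integral[OF pos])
    also have "\<dots> = ennreal (h ((u, 1) /\<^sub>R N u) * (1 / N u) ^ n)"
      using h0 N1[of u] by (subst ennreal_mult[symmetric]) (auto simp: n)
    finally show "(\<integral>\<^sup>+t. G t u \<partial>lborel) = ennreal (h ((u, 1) /\<^sub>R N u) * (1 / N u) ^ n)" .
  qed
  finally show ?thesis unfolding N_def n_def .
qed


lemma sphere_nn_ball:
  fixes f :: "'e::euclidean_space \<Rightarrow> ennreal"
  assumes [measurable]: "f \<in> borel_measurable borel"
  shows "(\<integral>\<^sup>+th. f th \<partial>sphere_measure) =
     (\<integral>\<^sup>+x. (ennreal (real DIM('e)) * indicator (ball 0 1) x) * f (x /\<^sub>R norm x) \<partial>lborel)"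
proof -
  have [measurable]: "ball (0::'e) 1 \<in> sets borel" by simp
  show ?thesis unfolding sphere_measure_def
    by (subst nn_integral_distr, measurable, rule nn_integral_density, measurable)
qed

lemma sphere_rot:
  fixes h :: "'e::euclidean_space \<Rightarrow> real" and L :: "'e \<Rightarrow> 'e"
  assumes L: "orthogonal_transformation L" and hm[measurable]: "h \<in> borel_measurable borel"
  shows "(\<integral>\<^sup>+th. ennreal (h (L th)) \<partial>sphere_measure) = (\<integral>\<^sup>+th. ennreal (h th) \<partial>sphere_measure)"
proof -
  have Lm[measurable]: "L \<in> borel_measurable borel" using L by (rule orth_measurable)
  have [measurable]: "ball (0::'e) 1 \<in> sets borel" by simp
  define G where "G y = (ennreal (real DIM('e)) * indicator (ball 0 1) y) * ennreal (h (y /\<^sub>R norm y))" for y :: 'e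
  have Gm[measurable]: "G \<in> borel_measurable borel" unfolding G_def[abs_def] by measurable
  have "(\<integral>\<^sup>+th. ennreal (h (L th)) \<partial>sphere_measure)
      = (\<integral>\<^sup>+x. (ennreal (real DIM('e)) * indicator (ball 0 1) x) * ennreal (h (L (x /\<^sub>R norm x))) \<partial>lborel)"
    by (rule sphere_nn_ball) measurable
  also have "\<dots> = (\<integral>\<^sup>+x. G (L x) \<partial>lborel)"
  proof (rule nn_integral_cong)
    fix x :: 'e
    have n: "norm (L x) = norm x" using L by (rule orthogonal_transformation_norm)
    have l: "L (x /\<^sub>R norm x) = L x /\<^sub>R norm x"
      using orthogonal_transformation_linear[OF L] by (simp add: linear_scale)
    show "(ennreal (real DIM('e)) * indicator (ball 0 1) x) * ennreal (h (L (x /\<^sub>R norm x))) = G (L x)"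
      unfolding G_def l n by (simp add: indicator_def n)
  qed
  also have "\<dots> = (\<integral>\<^sup>+y. G y \<partial>distr lborel borel L)"
    by (rule nn_integral_distr[symmetric]) measurable
  also have "\<dots> = (\<integral>\<^sup>+y. G y \<partial>lborel)"
    by (simp add: distr_orth[OF L])
  also have "\<dots> = (\<integral>\<^sup>+th. ennreal (h th) \<partial>sphere_measure)"
    unfolding G_def by (rule sphere_nn_ball[symmetric]) measurable
  finally show ?thesis .
qed



lemma adjoint_orth:
  fixes Q :: "'e::euclidean_space \<Rightarrow> 'e"
  assumes Q: "orthogonal_transformation Q"
  shows "orthogonal_transformation (adjoint Q)"
proof -
  have lin: "linear Q" using Q by (rule orthogonal_transformation_linear)
  have aQ: "adjoint Q (Q a) = a" for a
  proof -
    have "w \<bullet> adjoint Q (Q a) = w \<bullet> a" for w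
      using adjoint_works[OF lin, of w "Q a"] Q by (simp add: orthogonal_transformation_def)
    then show ?thesis using vector_eq_ldot by blast
  qed
  have "adjoint Q = inv Q"
  proof
    fix y
    have "Q (inv Q y) = y" using orthogonal_transformation_surj[OF Q] by (simp add: surj_f_inv_f)
    then show "adjoint Q y = inv Q y" using aQ[of "inv Q y"] by simp
  qed
  then show ?thesis using orthogonal_transformation_inv[OF Q] by simp
qed

definition NN :: "'a::euclidean_space \<Rightarrow> real" where "NN u = norm (u, 1::real)"

definition AA :: "real \<Rightarrow> 'a::euclidean_space \<Rightarrow> 'a \<times> real" where
  "AA e v = (v /\<^sub>R NN (e *\<^sub>R v), (1 / NN (e *\<^sub>R v) - 1) / e^2)"

lemma NN_ge1: "NN u \<ge> 1"
  unfolding NN_def by (rule norm_u1_ge)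

lemma NN_measurable[measurable]: "NN \<in> borel_measurable borel"
  unfolding NN_def[abs_def] by measurable

lemma sets_sphere: "sets sphere_measure = sets (borel :: 'a::euclidean_space measure)"
  by (simp add: sphere_measure_def)

lemma meas_sphere: "f \<in> borel_measurable borel \<Longrightarrow> f \<in> borel_measurable (sphere_measure :: 'a::euclidean_space measure)"
  using measurable_cong_sets[OF sets_sphere refl] by blast

context
  fixes chi :: "'a::euclidean_space \<times> real \<Rightarrow> real"
  assumes smooth: "smooth_fun chi"
    and bounds: "\<And>xi. 0 \<le> chi xi \<and> chi xi \<le> 1"
    and supp: "closure {xi. chi xi \<noteq> 0} \<subseteq> ball 0 (1/2)"
begin

lemma chi_cont: "continuous_on UNIV chi"
proof -
  have "Ck 0 chi" using smooth unfolding smooth_fun_def by blast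
  then show ?thesis by simp
qed

lemma chi_meas[measurable]: "chi \<in> borel_measurable borel"
  by (rule borel_measurable_continuous_onI[OF chi_cont])

lemma chi_supp: "chi xi \<noteq> 0 \<Longrightarrow> norm xi < 1/2"
proof -
  assume "chi xi \<noteq> 0"
  then have "xi \<in> {xi. chi xi \<noteq> 0}" by simp
  then have "xi \<in> closure {xi. chi xi \<noteq> 0}" by (rule closure_subset[THEN subsetD])
  then have "xi \<in> ball 0 (1/2)" by (rule supp[THEN subsetD])
  then show ?thesis by (simp add: dist_norm)
qed

lemma chi_eps_zero:
  assumes e: "0 < e" "e \<le> 1" and s: "snd th \<le> 0"
  shows "chi_eps chi e th = 0"
proof -
  have "e^2 \<le> 1" using e by (simp add: power_le_one)
  then have "1 \<le> (1 - snd th) / e^2" using e s by (simp add: field_simps)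
  also have "(1 - snd th) / e^2 = \<bar>(snd th - 1) / e^2\<bar>"
    using s by (simp add: abs_divide)
  also have "\<dots> \<le> norm (fst th /\<^sub>R e, (snd th - 1) / e^2)"
    using norm_snd_le[of "(snd th - 1) / e^2" "fst th /\<^sub>R e"] by simp
  finally have n1: "1 \<le> norm (fst th /\<^sub>R e, (snd th - 1) / e^2)" .
  have "chi (fst th /\<^sub>R e, (snd th - 1) / e^2) = 0"
  proof (rule ccontr)
    assume "chi (fst th /\<^sub>R e, (snd th - 1) / e^2) \<noteq> 0"
    from chi_supp[OF this] n1 show False by simp
  qed
  then show ?thesis by (simp add: chi_eps_def)
qed

lemma chi_eps_cont: "e > 0 \<Longrightarrow> continuous_on UNIV (chi_eps chi e)"
  unfolding chi_eps_def[abs_def]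
  by (intro continuous_intros continuous_on_compose2[OF chi_cont]) auto

lemma chi_eps_meas: "e > 0 \<Longrightarrow> chi_eps chi e \<in> borel_measurable borel"
  by (rule borel_measurable_continuous_onI[OF chi_eps_cont])

lemma main_formula:
  fixes Q :: "'a \<times> real \<Rightarrow> 'a \<times> real" and \<phi> :: "real \<Rightarrow> real"
  assumes e: "0 < e" "e \<le> 1" and Q: "orthogonal_transformation Q"
    and phim[measurable]: "\<phi> \<in> borel_measurable borel" and phi0: "\<And>x. 0 \<le> \<phi> x" and phiz: "\<phi> 0 = 0"
  shows "(\<integral>\<^sup>+th. ennreal (\<phi> (f_eps chi e Q th)) \<partial>sphere_measure)
    = (\<integral>\<^sup>+v. ennreal (e ^ DIM('a) * \<phi> (e powr (- real DIM('a)) * chi (AA e v)) * (1 / NN (e *\<^sub>R v)) ^ DIM('a \<times> real)) \<partial>lborel)"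
proof -
  define hh where "hh th = \<phi> (chi_eps chi e th)" for th
  have hhm[measurable]: "hh \<in> borel_measurable borel"
    unfolding hh_def[abs_def] by (rule measurable_compose[OF chi_eps_meas[OF e(1)] phim])
  have "(\<integral>\<^sup>+th. ennreal (\<phi> (f_eps chi e Q th)) \<partial>sphere_measure) = (\<integral>\<^sup>+th. ennreal (hh (adjoint Q th)) \<partial>sphere_measure)"
    by (simp add: f_eps_def hh_def)
  also have "\<dots> = (\<integral>\<^sup>+th. ennreal (hh th) \<partial>sphere_measure)"
    by (rule sphere_rot[OF adjoint_orth[OF Q] hhm])
  also have "\<dots> = (\<integral>\<^sup>+u. ennreal (hh ((u, 1) /\<^sub>R norm (u, 1::real)) * (1 / norm (u, 1::real)) ^ DIM('a \<times> real)) \<partial>lborel)"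
    by (rule sphere_nn[OF hhm]) (simp_all add: hh_def phi0 chi_eps_zero[OF e] phiz)
  also have "\<dots> = ennreal (e ^ DIM('a)) * (\<integral>\<^sup>+v. ennreal (hh ((e *\<^sub>R v, 1) /\<^sub>R norm (e *\<^sub>R v, 1::real)) * (1 / norm (e *\<^sub>R v, 1::real)) ^ DIM('a \<times> real)) \<partial>lborel)"
    by (rule nn_integral_scale) (measurable, rule e)
  also have "\<dots> = (\<integral>\<^sup>+v. ennreal (e ^ DIM('a)) * ennreal (hh ((e *\<^sub>R v, 1) /\<^sub>R norm (e *\<^sub>R v, 1::real)) * (1 / norm (e *\<^sub>R v, 1::real)) ^ DIM('a \<times> real)) \<partial>lborel)"
    by (rule nn_integral_cmult[symmetric]) measurable
  also have "\<dots> = (\<integral>\<^sup>+v. ennreal (e ^ DIM('a) * \<phi> (e powr (- real DIM('a)) * chi (AA e v)) * (1 / NN (e *\<^sub>R v)) ^ DIM('a \<times> real)) \<partial>lborel)"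
  proof (rule nn_integral_cong)
    fix v :: 'a
    have N: "NN (e *\<^sub>R v) \<ge> 1" by (rule NN_ge1)
    have p: "(e *\<^sub>R v, 1::real) /\<^sub>R norm (e *\<^sub>R v, 1::real) = ((e *\<^sub>R v) /\<^sub>R NN (e *\<^sub>R v), 1 / NN (e *\<^sub>R v))"
      by (simp add: NN_def divide_inverse)
    have f: "((e *\<^sub>R v) /\<^sub>R NN (e *\<^sub>R v)) /\<^sub>R e = v /\<^sub>R NN (e *\<^sub>R v)"
      using e by (simp add: scaleR_scaleR)
    have hh: "hh ((e *\<^sub>R v, 1) /\<^sub>R norm (e *\<^sub>R v, 1::real)) = \<phi> (e powr (- real DIM('a)) * chi (AA e v))"
      unfolding hh_def p chi_eps_def fst_conv snd_conv f AA_def ..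
    have nn: "norm (e *\<^sub>R v, 1::real) = NN (e *\<^sub>R v)" by (simp add: NN_def)
    show "ennreal (e ^ DIM('a)) * ennreal (hh ((e *\<^sub>R v, 1) /\<^sub>R norm (e *\<^sub>R v, 1::real)) * (1 / norm (e *\<^sub>R v, 1::real)) ^ DIM('a \<times> real))
      = ennreal (e ^ DIM('a) * \<phi> (e powr (- real DIM('a)) * chi (AA e v)) * (1 / NN (e *\<^sub>R v)) ^ DIM('a \<times> real))"
      unfolding hh unfolding nn using e phi0 N
      by (subst mult.assoc, subst ennreal_mult) auto
  qed
  finally show ?thesis .
qed


lemma NN_sq: "(NN (e *\<^sub>R v))^2 = e^2 * (norm v)^2 + 1"
  by (simp add: NN_def norm_Pair power_mult_distrib)

lemma AA_meas: "AA e \<in> borel_measurable borel"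
  unfolding AA_def[abs_def] by measurable

definition KK :: "real \<Rightarrow> 'a \<Rightarrow> real" where
  "KK e v = chi (AA e v) * (1 / NN (e *\<^sub>R v)) ^ DIM('a \<times> real)"

lemma KK_meas: "KK e \<in> borel_measurable borel"
proof -
  have "(\<lambda>v. chi (AA e v)) \<in> borel_measurable borel"
    by (rule measurable_compose[OF AA_meas chi_meas])
  then show ?thesis unfolding KK_def[abs_def] by measurable
qed

lemma KK_nonneg: "0 \<le> KK e v"
  unfolding KK_def using bounds[of "AA e v"] NN_ge1[of "e *\<^sub>R v"] by simp

lemma KK_bound:
  assumes e: "0 < e" "e \<le> 1"
  shows "KK e v \<le> indicator (cball 0 1) v"
proof -
  define N where "N = NN (e *\<^sub>R v)"
  have N1: "N \<ge> 1" unfolding N_def by (rule NN_ge1)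
  have y0: "0 \<le> (1 / N) ^ DIM('a \<times> real)" using N1 by simp
  have y1: "(1 / N) ^ DIM('a \<times> real) \<le> 1" using N1 by (intro power_le_one) auto
  show ?thesis
  proof (cases "chi (AA e v) = 0")
    case True
    then show ?thesis unfolding KK_def by (simp add: indicator_def)
  next
    case False
    then have "norm (AA e v) < 1/2" by (rule chi_supp)
    moreover have "norm (v /\<^sub>R N) \<le> norm (AA e v)"
      unfolding AA_def N_def[symmetric] by (rule norm_fst_le)
    ultimately have "norm (v /\<^sub>R N) < 1/2" by simp
    moreover have "norm (v /\<^sub>R N) = inverse N * norm v" using N1 by simp
    ultimately have nv: "inverse N * norm v < 1/2" by linarith
    have "norm v = (inverse N * norm v) * N" using N1 by simp
    also have "\<dots> < (1/2) * N" using nv N1 by (intro mult_strict_right_mono) auto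
    finally have lt: "2 * norm v < N" by simp
    have "N^2 = e^2 * (norm v)^2 + 1" unfolding N_def by (rule NN_sq)
    also have "\<dots> \<le> (norm v)^2 + 1"
      using e by (simp add: mult_left_le_one_le power_le_one)
    finally have "N^2 \<le> (norm v)^2 + 1" .
    moreover have "(2 * norm v)^2 < N^2"
      using lt by (intro power_strict_mono) auto
    ultimately have "4 * (norm v)^2 < (norm v)^2 + 1" by (simp add: power_mult_distrib)
    then have "(norm v)^2 < 1" by simp
    then have "norm v \<le> 1" by (simp add: power_less_one_iff abs_square_less_1)
    then have "v \<in> cball 0 1" by simp
    moreover have "KK e v \<le> 1"
      unfolding KK_def N_def[symmetric]
      by (rule mult_le_one[OF conjunct2[OF bounds[of "AA e v"]] y0 y1])
    ultimately show ?thesis by simp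
  qed
qed

lemma KK_lim: "((\<lambda>e. KK e v) \<longlongrightarrow> chi (v, - (norm v)\<^sup>2 / 2)) (at_right 0)"
proof -
  have Nlim: "((\<lambda>e. NN (e *\<^sub>R v)) \<longlongrightarrow> 1) (at_right 0)"
  proof -
    have "((\<lambda>e. norm (e *\<^sub>R v, 1::real)) \<longlongrightarrow> norm (0 *\<^sub>R v, 1::real)) (at_right 0)"
      by (intro tendsto_intros)
    then show ?thesis by (simp add: NN_def)
  qed
  have l1: "((\<lambda>e. v /\<^sub>R NN (e *\<^sub>R v)) \<longlongrightarrow> v /\<^sub>R 1) (at_right 0)"
    by (intro tendsto_intros Nlim) simp
  have eq2: "\<forall>\<^sub>F e in at_right 0. - (norm v)\<^sup>2 / (NN (e *\<^sub>R v) * (1 + NN (e *\<^sub>R v))) = (1 / NN (e *\<^sub>R v) - 1) / e^2"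
    using eventually_at_right_less[of "0::real"]
  proof eventually_elim
    case (elim e)
    then have e: "0 < e" .
    define N where "N = NN (e *\<^sub>R v)"
    have N1: "N \<ge> 1" unfolding N_def by (rule NN_ge1)
    have sq: "N^2 = e^2 * (norm v)^2 + 1" unfolding N_def by (rule NN_sq)
    have a: "(1 / N - 1) * (N * (1 + N)) = (1 - N) * (1 + N)" using N1 by (simp add: field_simps)
    have b: "(1 - N) * (1 + N) = - (e^2 * (norm v)^2)" using sq by (simp add: algebra_simps power2_eq_square)
    have "(1 / N - 1) / e^2 * (N * (1 + N)) = ((1 / N - 1) * (N * (1 + N))) / e^2" by simp
    also have "\<dots> = - (e^2 * (norm v)^2) / e^2" using a b by simp
    also have "\<dots> = - (norm v)\<^sup>2" using e by simp
    finally have c: "(1 / N - 1) / e^2 * (N * (1 + N)) = - (norm v)\<^sup>2" .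
    have "- (norm v)\<^sup>2 / (N * (1 + N)) = (1 / N - 1) / e^2"
      using c N1 by (subst divide_eq_eq) auto
    then show "- (norm v)\<^sup>2 / (NN (e *\<^sub>R v) * (1 + NN (e *\<^sub>R v))) = (1 / NN (e *\<^sub>R v) - 1) / e^2"
      unfolding N_def by simp
  qed
  have l2': "((\<lambda>e. - (norm v)\<^sup>2 / (NN (e *\<^sub>R v) * (1 + NN (e *\<^sub>R v)))) \<longlongrightarrow> - (norm v)\<^sup>2 / (1 * (1 + 1))) (at_right 0)"
    by (intro tendsto_intros Nlim) simp
  have l2: "((\<lambda>e. (1 / NN (e *\<^sub>R v) - 1) / e^2) \<longlongrightarrow> - (norm v)\<^sup>2 / 2) (at_right 0)"
    using tendsto_cong[OF eq2] l2' by simp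
  have lA: "((\<lambda>e. AA e v) \<longlongrightarrow> (v, - (norm v)\<^sup>2 / 2)) (at_right 0)"
    unfolding AA_def using tendsto_Pair[OF l1 l2] by simp
  have lc: "((\<lambda>e. chi (AA e v)) \<longlongrightarrow> chi (v, - (norm v)\<^sup>2 / 2)) (at_right 0)"
    by (rule continuous_on_tendsto_compose[OF chi_cont lA]) auto
  have ly: "((\<lambda>e. (1 / NN (e *\<^sub>R v)) ^ DIM('a \<times> real)) \<longlongrightarrow> (1 / 1) ^ DIM('a \<times> real)) (at_right 0)"
    by (intro tendsto_intros Nlim) simp
  show ?thesis
    unfolding KK_def using tendsto_mult[OF lc ly] by simp
qed


lemma f_meas:
  assumes e: "0 < e" and Q: "orthogonal_transformation Q"
  shows "f_eps chi e Q \<in> borel_measurable borel"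
  unfolding f_eps_def[abs_def]
  by (rule measurable_compose[OF orth_measurable[OF adjoint_orth[OF Q]] chi_eps_meas[OF e]])

lemma powr_inv: "0 < e \<Longrightarrow> e powr (- real n) = inverse (e ^ n)"
  by (simp add: powr_minus powr_realpow)

lemma L1_eq:
  fixes Q :: "'a \<times> real \<Rightarrow> 'a \<times> real"
  assumes e: "0 < e" "e \<le> 1" and Q: "orthogonal_transformation Q"
  shows "integral\<^sup>L sphere_measure (\<lambda>th. \<bar>f_eps chi e Q th\<bar>) = integral\<^sup>L lborel (KK e)"
proof -
  have fm[measurable]: "f_eps chi e Q \<in> borel_measurable borel" by (rule f_meas[OF e(1) Q])
  have m1: "(\<lambda>th. \<bar>f_eps chi e Q th\<bar>) \<in> borel_measurable borel" by measurable
  have am: "(\<lambda>x::real. \<bar>x\<bar>) \<in> borel_measurable borel" by (rule borel_measurable_abs) simp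
  have "integral\<^sup>L sphere_measure (\<lambda>th. \<bar>f_eps chi e Q th\<bar>)
      = enn2real (\<integral>\<^sup>+th. ennreal \<bar>f_eps chi e Q th\<bar> \<partial>sphere_measure)"
    by (rule integral_eq_nn_integral[OF meas_sphere[OF m1]]) simp
  also have "(\<integral>\<^sup>+th. ennreal \<bar>f_eps chi e Q th\<bar> \<partial>sphere_measure)
      = (\<integral>\<^sup>+v. ennreal (e ^ DIM('a) * \<bar>e powr (- real DIM('a)) * chi (AA e v)\<bar> * (1 / NN (e *\<^sub>R v)) ^ DIM('a \<times> real)) \<partial>lborel)"
    by (rule main_formula[OF e Q am]) simp_all
  also have "\<dots> = (\<integral>\<^sup>+v. ennreal (KK e v) \<partial>lborel)"
  proof (rule nn_integral_cong)
    fix v :: 'a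
    have c0: "0 \<le> chi (AA e v)" using bounds by blast
    have "e ^ DIM('a) * \<bar>e powr (- real DIM('a)) * chi (AA e v)\<bar> = (e ^ DIM('a) * inverse (e ^ DIM('a))) * chi (AA e v)"
      using e c0 by (simp add: powr_inv abs_mult)
    also have "\<dots> = chi (AA e v)" using e by simp
    finally show "ennreal (e ^ DIM('a) * \<bar>e powr (- real DIM('a)) * chi (AA e v)\<bar> * (1 / NN (e *\<^sub>R v)) ^ DIM('a \<times> real)) = ennreal (KK e v)"
      unfolding KK_def by simp
  qed
  also have "enn2real \<dots> = integral\<^sup>L lborel (KK e)"
    by (rule integral_eq_nn_integral[symmetric]) (use KK_meas KK_nonneg in auto)
  finally show ?thesis .
qed

lemma L1_lim: "((\<lambda>e. integral\<^sup>L lborel (KK e)) \<longlongrightarrow> integral\<^sup>L lborel (\<lambda>eta. chi (eta, - (norm eta)\<^sup>2 / 2))) (at_right 0)"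
proof (rule tendsto_at_right_sequentially[where b=1])
  show "(0::real) < 1" by simp
next
  fix S :: "nat \<Rightarrow> real"
  assume S0: "\<And>n. 0 < S n" and S1: "\<And>n. S n < 1" and "decseq S" and Slim: "S \<longlonglongrightarrow> 0"
  have Sf: "filterlim S (at_right 0) sequentially"
  proof -
    have "S n \<noteq> 0" for n using S0[of n] by simp
    then show ?thesis unfolding filterlim_at using S0 Slim by (auto intro!: always_eventually)
  qed
  show "(\<lambda>n. integral\<^sup>L lborel (KK (S n))) \<longlonglongrightarrow> integral\<^sup>L lborel (\<lambda>eta. chi (eta, - (norm eta)\<^sup>2 / 2))"
  proof (rule integral_dominated_convergence[where w="indicator (cball 0 1)"])
    have "(\<lambda>eta::'a. (eta, - (norm eta)\<^sup>2 / 2)) \<in> borel_measurable borel" by measurable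
    then show "(\<lambda>eta. chi (eta, - (norm eta)\<^sup>2 / 2)) \<in> borel_measurable lborel"
      using measurable_compose[OF _ chi_meas] by simp
    show "KK (S i) \<in> borel_measurable lborel" for i using KK_meas by simp
    show "integrable lborel (indicator (cball (0::'a) 1) :: 'a \<Rightarrow> real)"
      by (rule integrable_real_indicator) (simp, rule emeasure_lborel_cball_finite)
    show "AE x in lborel. (\<lambda>i. KK (S i) x) \<longlonglongrightarrow> chi (x, - (norm x)\<^sup>2 / 2)"
      by (rule AE_I2) (rule filterlim_compose[OF KK_lim Sf])
    show "AE x in lborel. norm (KK (S i) x) \<le> indicator (cball 0 1) x" for i
    proof (rule AE_I2)
      fix x :: 'a
      show "norm (KK (S i) x) \<le> indicator (cball 0 1) x"
        using KK_nonneg[of "S i" x] KK_bound[OF S0[of i] less_imp_le[OF S1[of i]], of x] by simp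
    qed
  qed
qed

lemma L2_bound:
  fixes Q :: "'a \<times> real \<Rightarrow> 'a \<times> real"
  assumes e: "0 < e" "e \<le> 1" and Q: "orthogonal_transformation Q"
  shows "integral\<^sup>L sphere_measure (\<lambda>th. (f_eps chi e Q th)\<^sup>2) \<le> e powr (- real DIM('a)) * measure lborel (cball (0::'a) 1)"
proof -
  define p where "p = e powr (- real DIM('a))"
  have p: "p = inverse (e ^ DIM('a))" unfolding p_def using e by (simp add: powr_inv)
  have p0: "0 \<le> p" unfolding p using e by simp
  have fm[measurable]: "f_eps chi e Q \<in> borel_measurable borel" by (rule f_meas[OF e(1) Q])
  have [measurable]: "cball (0::'a) 1 \<in> sets borel" by simp
  have m2: "(\<lambda>th. (f_eps chi e Q th)\<^sup>2) \<in> borel_measurable borel" by measurable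
  have am: "(\<lambda>x::real. x\<^sup>2) \<in> borel_measurable borel" by (rule borel_measurable_power) simp
  have fin: "emeasure lborel (cball (0::'a) 1) < top"
    using emeasure_lborel_cball_finite[of "0::'a" 1] by (simp add: infinity_ennreal_def)
  have fin2: "emeasure lborel (cball (0::'a) 1) = ennreal (measure lborel (cball (0::'a) 1))"
    using fin by (intro emeasure_eq_ennreal_measure) simp
  have "integral\<^sup>L sphere_measure (\<lambda>th. (f_eps chi e Q th)\<^sup>2)
      = enn2real (\<integral>\<^sup>+th. ennreal ((f_eps chi e Q th)\<^sup>2) \<partial>sphere_measure)"
    by (rule integral_eq_nn_integral[OF meas_sphere[OF m2]]) simp
  also have "(\<integral>\<^sup>+th. ennreal ((f_eps chi e Q th)\<^sup>2) \<partial>sphere_measure)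
      = (\<integral>\<^sup>+v. ennreal (e ^ DIM('a) * (e powr (- real DIM('a)) * chi (AA e v))\<^sup>2 * (1 / NN (e *\<^sub>R v)) ^ DIM('a \<times> real)) \<partial>lborel)"
    by (rule main_formula[OF e Q am]) simp_all
  also have "enn2real \<dots> \<le> enn2real (\<integral>\<^sup>+v. ennreal p * indicator (cball (0::'a) 1) v \<partial>lborel)"
  proof (rule enn2real_mono)
    show "(\<integral>\<^sup>+v. ennreal (e ^ DIM('a) * (e powr (- real DIM('a)) * chi (AA e v))\<^sup>2 * (1 / NN (e *\<^sub>R v)) ^ DIM('a \<times> real)) \<partial>lborel)
        \<le> (\<integral>\<^sup>+v. ennreal p * indicator (cball (0::'a) 1) v \<partial>lborel)"
    proof (rule nn_integral_mono)
      fix v :: 'a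
      define c0 where "c0 = chi (AA e v)"
      define y where "y = (1 / NN (e *\<^sub>R v)) ^ DIM('a \<times> real)"
      have c0b: "0 \<le> c0" "c0 \<le> 1" unfolding c0_def using bounds by auto
      have y0: "0 \<le> y" unfolding y_def using NN_ge1[of "e *\<^sub>R v"] by simp
      have X: "e ^ DIM('a) * (e powr (- real DIM('a)) * c0)\<^sup>2 * y = p * (c0 * c0 * y)"
        unfolding p_def[symmetric] p using e by (simp add: power2_eq_square field_simps)
      have "c0 * c0 * y \<le> c0 * y"
        using c0b y0 by (intro mult_right_mono) (auto intro: mult_left_le_one_le)
      also have "c0 * y = KK e v" unfolding KK_def c0_def y_def ..
      also have "\<dots> \<le> indicator (cball 0 1) v" by (rule KK_bound[OF e])
      finally have "e ^ DIM('a) * (e powr (- real DIM('a)) * c0)\<^sup>2 * y \<le> p * indicator (cball 0 1) v"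
        unfolding X using p0 by (rule mult_left_mono)
      then show "ennreal (e ^ DIM('a) * (e powr (- real DIM('a)) * chi (AA e v))\<^sup>2 * (1 / NN (e *\<^sub>R v)) ^ DIM('a \<times> real))
          \<le> ennreal p * indicator (cball 0 1) v"
        unfolding c0_def y_def by (cases "v \<in> cball 0 1") (auto simp: indicator_def ennreal_eq_0_iff intro: ennreal_leI)
    qed
    show "(\<integral>\<^sup>+v. ennreal p * indicator (cball (0::'a) 1) v \<partial>lborel) < top"
      using fin by (simp add: nn_integral_cmult_indicator ennreal_mult_less_top)
  qed
  also have "(\<integral>\<^sup>+v. ennreal p * indicator (cball (0::'a) 1) v \<partial>lborel) = ennreal p * ennreal (measure lborel (cball (0::'a) 1))"
    by (simp add: nn_integral_cmult_indicator fin2)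
  also have "enn2real \<dots> = p * measure lborel (cball (0::'a) 1)"
    using p0 by (simp add: ennreal_mult[symmetric])
  finally show ?thesis unfolding p_def .
qed


lemma main_result:
  shows "(\<forall>Q. orthogonal_transformation Q \<longrightarrow>
           ((\<lambda>eps. integral\<^sup>L sphere_measure (\<lambda>th. \<bar>f_eps chi eps Q th\<bar>))
              \<longlongrightarrow> integral\<^sup>L lborel (\<lambda>eta::'a. chi (eta, - (norm eta)\<^sup>2 / 2))) (at_right 0))
       \<and> (\<exists>C>0. \<forall>eps\<in>{0<..1}. \<forall>Q. orthogonal_transformation Q \<longrightarrow>
           sqrt (integral\<^sup>L sphere_measure (\<lambda>th. (f_eps chi eps Q th)\<^sup>2))
             \<le> C * eps powr (- real DIM('a) / 2))"
proof (intro conjI allI impI)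
  fix Q :: "'a \<times> real \<Rightarrow> 'a \<times> real"
  assume Q: "orthogonal_transformation Q"
  have lt1: "\<forall>\<^sub>F e in at_right (0::real). e < 1"
    using order_tendstoD(2)[OF tendsto_ident_at[of "0::real" "{0<..}"], of 1] by simp
  have ev: "\<forall>\<^sub>F e in at_right 0. integral\<^sup>L lborel (KK e) = integral\<^sup>L sphere_measure (\<lambda>th. \<bar>f_eps chi e Q th\<bar>)"
    using lt1 eventually_at_right_less[of "0::real"]
  proof eventually_elim
    case (elim e)
    then show ?case using L1_eq[of e Q] Q by simp
  qed
  show "((\<lambda>eps. integral\<^sup>L sphere_measure (\<lambda>th. \<bar>f_eps chi eps Q th\<bar>))
              \<longlongrightarrow> integral\<^sup>L lborel (\<lambda>eta::'a. chi (eta, - (norm eta)\<^sup>2 / 2))) (at_right 0)"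
    by (rule iffD1[OF tendsto_cong[OF ev] L1_lim])
next
  define M where "M = measure lborel (cball (0::'a) 1)"
  have M0: "0 \<le> M" unfolding M_def by simp
  show "\<exists>C>0. \<forall>eps\<in>{0<..1}. \<forall>Q. orthogonal_transformation Q \<longrightarrow>
           sqrt (integral\<^sup>L sphere_measure (\<lambda>th. (f_eps chi eps Q th)\<^sup>2))
             \<le> C * eps powr (- real DIM('a) / 2)"
  proof (intro exI[of _ "sqrt M + 1"] conjI ballI allI impI)
    have "0 \<le> sqrt M" using M0 by simp
    then show "0 < sqrt M + 1" by linarith
    fix eps :: real and Q :: "'a \<times> real \<Rightarrow> 'a \<times> real"
    assume e: "eps \<in> {0<..1}" and Q: "orthogonal_transformation Q"
    have e': "0 < eps" "eps \<le> 1" using e by auto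
    have "sqrt (integral\<^sup>L sphere_measure (\<lambda>th. (f_eps chi eps Q th)\<^sup>2)) \<le> sqrt (eps powr (- real DIM('a)) * M)"
      unfolding M_def by (rule real_sqrt_le_mono[OF L2_bound[OF e' Q]])
    also have "\<dots> = sqrt M * eps powr (- real DIM('a) / 2)"
    proof -
      have hs: "eps powr (- real DIM('a) / 2) = sqrt (eps powr (- real DIM('a)))"
        by (rule powr_half_sqrt_powr) (use e' in simp)
      show ?thesis by (simp only: real_sqrt_mult hs mult.commute)
    qed
    also have "\<dots> \<le> (sqrt M + 1) * eps powr (- real DIM('a) / 2)"
      by (intro mult_right_mono) auto
    finally show "sqrt (integral\<^sup>L sphere_measure (\<lambda>th. (f_eps chi eps Q th)\<^sup>2)) \<le> (sqrt M + 1) * eps powr (- real DIM('a) / 2)" .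
  qed
qed

end

theorem lemma4p1:
  fixes chi :: "'a::euclidean_space \<times> real \<Rightarrow> real"
  assumes smooth: "smooth_fun chi"
    and bounds: "\<And>xi. 0 \<le> chi xi \<and> chi xi \<le> 1"
    and supp: "closure {xi. chi xi \<noteq> 0} \<subseteq> ball 0 (1/2)"
  shows "(\<forall>Q. orthogonal_transformation Q \<longrightarrow>
           ((\<lambda>eps. integral\<^sup>L sphere_measure (\<lambda>th. \<bar>f_eps chi eps Q th\<bar>))
              \<longlongrightarrow> integral\<^sup>L lborel (\<lambda>eta::'a. chi (eta, - (norm eta)\<^sup>2 / 2))) (at_right 0))
       \<and> (\<exists>C>0. \<forall>eps\<in>{0<..1}. \<forall>Q. orthogonal_transformation Q \<longrightarrow>
           sqrt (integral\<^sup>L sphere_measure (\<lambda>th. (f_eps chi eps Q th)\<^sup>2))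
             \<le> C * eps powr (- real DIM('a) / 2))"
  by (rule main_result[OF smooth bounds supp])

end
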